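(* For every set of formulas $\Delta$ and every formula $\varphi$ of $\mathrm{PRED2}_0$: if $\Delta\vdash_{\mathrm{PRED2}_0}\varphi$ then $\lceil\Delta\rceil,\Gamma(\Delta\cup\{\varphi\})\vdash_{\mathcal I_0}\lceil\varphi\rceil$.
   Context: $\mathrm{PRED2}_0$: types $\mathcal T::=o\mid\mathcal B\mid\mathcal B\to\mathcal T$ with $\mathcal B$ a finite set of base types; for each type $\tau$, countable sets $V_\tau$ of variables and $\Sigma_\tau$ of constants; terms of type $\tau$: variables, constants, applications $t_1t_2$ ($t_1\in T_{\sigma\to\tau}$, $t_2\in T_\sigma$, $\sigma\in\mathcal B$); formulas (type $o$) additionally include $\varphi\supset\psi$ and $\forall x.\varphi$ for $x\in V_\sigma$, $\sigma\in\mathcal B\cup\{o\}$; $\alpha$-equivalent formulas identified. Derivation rules: axiom $\Delta,\varphi\vdash\varphi$; $\supset$-introduction (from $\Delta,\varphi\vdash\psi$ infer $\Delta\vdash\varphi\supset\psi$); modus ponens; $\forall$-introduction (from $\Delta\vdash\varphi$ infer $\Delta\vdash\forall x_\tau.\varphi$ if $x_\tau\notin FV(\Delta)$); $\forall$-elimination (from $\Delta\vdash\forall x_\tau.\varphi$ infer $\Delta\vdash\varphi[x/t]$, $t\in T_\tau$). For arbitrary $\Delta$, derivability means from a finite subset. $\mathcal I_0$: primitive constants $\Sigma$ contain $\Xi$, $L$, $A_\tau$ ($\tau\in\mathcal B$) and every constant of every $\Sigma_\tau$; variables of $\mathrm{PRED2}_0$ are variables of $\mathcal I_0$; terms are type-free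 lambda-terms over $\Sigma$. Abbreviations: $I=\lambda x.x$, $K=\lambda xy.x$, $H=\lambda x.L(Kx)$, $\supset\;=\lambda xy.\Xi(Kx)(Ky)$ (infix), $F=\lambda xyf.\Xi x(\lambda z.y(fz))$. Axioms: $\Gamma,t\vdash t$; $\Gamma\vdash LH$; $\Gamma\vdash LA_\tau$ ($\tau\in\mathcal B$). Rules: (Eq) from $\Gamma\vdash t_1$, $t_1=_{\beta\eta}t_2$ infer $\Gamma\vdash t_2$; ($H_i$) from $\Gamma\vdash t$ infer $\Gamma\vdash Ht$; ($\Xi_e$) from $\Gamma\vdash\Xi t_1t_2$, $\Gamma\vdash t_1t_3$ infer $\Gamma\vdash t_2t_3$; ($\Xi_i$) from $\Gamma,t_1x\vdash t_2x$, $\Gamma\vdash Lt_1$ infer $\Gamma\vdash\Xi t_1t_2$; ($\Xi_H$) from $\Gamma,t_1x\vdash H(t_2x)$, $\Gamma\vdash Lt_1$ infer $\Gamma\vdash H(\Xi t_1t_2)$; in the last two $x\notin FV(\Gamma,t_1,t_2)$. For arbitrary $\Gamma$, $\Gamma\vdash_{\mathcal I_0}t$ means derivable from a finite subset. Set $A_o=H$ and $A_{\tau_1\to\tau_2}=FA_{\tau_1}A_{\tau_2}$. Translation $\lceil\cdot\rceil$: $\lceil x\rceil=x$, $\lceil c\rceil=c$, $\lceil t_1t_2\rceil=\lceil t_1\rceil\lceil t_2\rceil$, $\lceil\varphi\supset\psi\rceil=\lceil\varphi\rceil\supset\lceil\psi\rceil$, $\lceil\forall x.\varphi\rceil=\Xi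 A_\tau(\lambda x.\lceil\varphi\rceil)$ for $x\in V_\tau$; $\lceil\Delta\rceil$ is the image of $\Delta$. For a set of formulas $\Delta$, $\Gamma(\Delta)$ consists of: $A_\tau x$ for every $x\in FV(\Delta)$ with $x\in V_\tau$; $A_\tau c$ for every $c\in\Sigma_\tau$ and every $\tau$; $LA_\tau$ for every $\tau\in\mathcal B$; and, for each $\tau\in\mathcal B$, $A_\tau y$ for some chosen variable $y\in V_\tau$ with $y\notin FV(\Delta)$. *)

theory Defs
  imports Main "HOL-Library.Countable"
begin

text \<open>Types T ::= o | B | B -> T, with B the finite type of base types 'b.\<close>
datatype 'b ty = To | Base 'b | Arr 'b "'b ty"

text \<open>Variables of type tau: V_tau = {(n, tau) | n :: nat} (countably infinite per type).\<close>
type_synonym 'b var = "nat \<times> 'b ty"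

text \<open>Syntax of PRED2_0 terms/formulas in locally nameless style: free variables are
  named (PV), bound variables are de Bruijn indices (PB); hence alpha-equivalent
  formulas are literally equal.\<close>
datatype ('b, 'c) pt =
    PV "'b var" | PB nat | PC 'c | PAp "('b, 'c) pt" "('b, 'c) pt"
  | PImp "('b, 'c) pt" "('b, 'c) pt" | PAll "'b ty" "('b, 'c) pt"

text \<open>Well-typedness; the list gives the types of the loose de Bruijn indices.
  ctype c is the type tau with c in Sigma_tau.\<close>
inductive typed :: "('c \<Rightarrow> 'b ty) \<Rightarrow> 'b ty list \<Rightarrow> ('b, 'c) pt \<Rightarrow> 'b ty \<Rightarrow> bool"
  for ctype where
  t_var: "typed ctype Ts (PV (n, \<tau>)) \<tau>"
| t_bnd: "i < length Ts \<Longrightarrow> typed ctype Ts (PB i) (Ts ! i)"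
| t_con: "typed ctype Ts (PC c) (ctype c)"
| t_app: "typed ctype Ts t1 (Arr \<sigma> \<tau>) \<Longrightarrow> typed ctype Ts t2 (Base \<sigma>) \<Longrightarrow>
          typed ctype Ts (PAp t1 t2) \<tau>"
| t_imp: "typed ctype Ts \<phi> To \<Longrightarrow> typed ctype Ts \<psi> To \<Longrightarrow> typed ctype Ts (PImp \<phi> \<psi>) To"
| t_all: "\<sigma> = To \<or> (\<exists>b. \<sigma> = Base b) \<Longrightarrow> typed ctype (\<sigma> # Ts) \<phi> To \<Longrightarrow>
          typed ctype Ts (PAll \<sigma> \<phi>) To"

definition term_of :: "('c \<Rightarrow> 'b ty) \<Rightarrow> ('b, 'c) pt \<Rightarrow> 'b ty \<Rightarrow> bool" where
  "term_of ctype t \<tau> \<longleftrightarrow> typed ctype [] t \<tau>"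

definition formula :: "('c \<Rightarrow> 'b ty) \<Rightarrow> ('b, 'c) pt \<Rightarrow> bool" where
  "formula ctype \<phi> \<longleftrightarrow> typed ctype [] \<phi> To"

primrec fvp :: "('b, 'c) pt \<Rightarrow> 'b var set" where
  "fvp (PV x) = {x}"
| "fvp (PB i) = {}"
| "fvp (PC c) = {}"
| "fvp (PAp t1 t2) = fvp t1 \<union> fvp t2"
| "fvp (PImp t1 t2) = fvp t1 \<union> fvp t2"
| "fvp (PAll \<sigma> t) = fvp t"

definition FVs :: "('b, 'c) pt set \<Rightarrow> 'b var set" where
  "FVs \<Delta> = (\<Union>\<delta>\<in>\<Delta>. fvp \<delta>)"

primrec openp :: "nat \<Rightarrow> ('b, 'c) pt \<Rightarrow> ('b, 'c) pt \<Rightarrow> ('b, 'c) pt" where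
  "openp k t (PV y) = PV y"
| "openp k t (PB i) = (if i = k then t else PB i)"
| "openp k t (PC c) = PC c"
| "openp k t (PAp t1 t2) = PAp (openp k t t1) (openp k t t2)"
| "openp k t (PImp t1 t2) = PImp (openp k t t1) (openp k t t2)"
| "openp k t (PAll \<sigma> u) = PAll \<sigma> (openp (Suc k) t u)"

primrec closep :: "nat \<Rightarrow> 'b var \<Rightarrow> ('b, 'c) pt \<Rightarrow> ('b, 'c) pt" where
  "closep k x (PV y) = (if y = x then PB k else PV y)"
| "closep k x (PB i) = PB i"
| "closep k x (PC c) = PC c"
| "closep k x (PAp t1 t2) = PAp (closep k x t1) (closep k x t2)"
| "closep k x (PImp t1 t2) = PImp (closep k x t1) (closep k x t2)"
| "closep k x (PAll \<sigma> u) = PAll \<sigma> (closep (Suc k) x u)"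

text \<open>forall x.phi for x in V_tau is PAll tau (closep 0 x phi); phi[x/t] for the body of
  PAll tau psi is openp 0 t psi.\<close>

inductive pder :: "('c \<Rightarrow> 'b ty) \<Rightarrow> ('b, 'c) pt set \<Rightarrow> ('b, 'c) pt \<Rightarrow> bool"
  for ctype where
  p_ax:   "formula ctype \<phi> \<Longrightarrow> pder ctype (insert \<phi> \<Delta>) \<phi>"
| p_impI: "formula ctype \<phi> \<Longrightarrow> pder ctype (insert \<phi> \<Delta>) \<psi> \<Longrightarrow> pder ctype \<Delta> (PImp \<phi> \<psi>)"
| p_mp:   "pder ctype \<Delta> \<phi> \<Longrightarrow> pder ctype \<Delta> (PImp \<phi> \<psi>) \<Longrightarrow> pder ctype \<Delta> \<psi>"
| p_allI: "pder ctype \<Delta> \<phi> \<Longrightarrow> x = (n, \<tau>) \<Longrightarrow> \<tau> = To \<or> (\<exists>b. \<tau> = Base b) \<Longrightarrow>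
           x \<notin> FVs \<Delta> \<Longrightarrow> pder ctype \<Delta> (PAll \<tau> (closep 0 x \<phi>))"
| p_allE: "pder ctype \<Delta> (PAll \<tau> \<phi>) \<Longrightarrow> term_of ctype t \<tau> \<Longrightarrow> pder ctype \<Delta> (openp 0 t \<phi>)"

definition pred_derivable :: "('c \<Rightarrow> 'b ty) \<Rightarrow> ('b, 'c) pt set \<Rightarrow> ('b, 'c) pt \<Rightarrow> bool" where
  "pred_derivable ctype \<Delta> \<phi> \<longleftrightarrow> (\<exists>\<Delta>0 \<subseteq> \<Delta>. finite \<Delta>0 \<and> pder ctype \<Delta>0 \<phi>)"

datatype ('b, 'c) iconst = Xi | Lc | Abase 'b | Sig 'c

datatype ('b, 'c) lt =
    LV "'b var" | LB nat | LC "('b, 'c) iconst" | LAp "('b, 'c) lt" "('b, 'c) lt" | LAbs "('b, 'c) lt"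

primrec lift :: "('b, 'c) lt \<Rightarrow> nat \<Rightarrow> ('b, 'c) lt" where
  "lift (LV x) k = LV x"
| "lift (LB i) k = (if i < k then LB i else LB (Suc i))"
| "lift (LC c) k = LC c"
| "lift (LAp s t) k = LAp (lift s k) (lift t k)"
| "lift (LAbs s) k = LAbs (lift s (Suc k))"

primrec subst :: "('b, 'c) lt \<Rightarrow> ('b, 'c) lt \<Rightarrow> nat \<Rightarrow> ('b, 'c) lt" where
  "subst (LV x) s k = LV x"
| "subst (LB i) s k = (if k < i then LB (i - 1) else if i = k then s else LB i)"
| "subst (LC c) s k = LC c"
| "subst (LAp t u) s k = LAp (subst t s k) (subst u s k)"
| "subst (LAbs t) s k = LAbs (subst t (lift s 0) (Suc k))"

inductive beq :: "('b, 'c) lt \<Rightarrow> ('b, 'c) lt \<Rightarrow> bool" where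
  beq_refl:  "beq t t"
| beq_sym:   "beq s t \<Longrightarrow> beq t s"
| beq_trans: "beq s t \<Longrightarrow> beq t u \<Longrightarrow> beq s u"
| beq_beta:  "beq (LAp (LAbs s) t) (subst s t 0)"
| beq_eta:   "beq (LAbs (LAp (lift s 0) (LB 0))) s"
| beq_app:   "beq s s' \<Longrightarrow> beq t t' \<Longrightarrow> beq (LAp s t) (LAp s' t')"
| beq_abs:   "beq s s' \<Longrightarrow> beq (LAbs s) (LAbs s')"

primrec lc_at :: "nat \<Rightarrow> ('b, 'c) lt \<Rightarrow> bool" where
  "lc_at k (LV x) = True"
| "lc_at k (LB i) = (i < k)"
| "lc_at k (LC c) = True"
| "lc_at k (LAp s t) = (lc_at k s \<and> lc_at k t)"
| "lc_at k (LAbs s) = lc_at (Suc k) s"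

primrec fvl :: "('b, 'c) lt \<Rightarrow> 'b var set" where
  "fvl (LV x) = {x}"
| "fvl (LB i) = {}"
| "fvl (LC c) = {}"
| "fvl (LAp s t) = fvl s \<union> fvl t"
| "fvl (LAbs s) = fvl s"

definition fvls :: "('b, 'c) lt set \<Rightarrow> 'b var set" where
  "fvls \<Gamma> = (\<Union>t\<in>\<Gamma>. fvl t)"

definition cI :: "('b, 'c) lt" where "cI = LAbs (LB 0)"
definition cK :: "('b, 'c) lt" where "cK = LAbs (LAbs (LB 1))"
definition cL :: "('b, 'c) lt" where "cL = LC Lc"
definition cXi :: "('b, 'c) lt" where "cXi = LC Xi"
definition cH :: "('b, 'c) lt" where "cH = LAbs (LAp cL (LAp cK (LB 0)))"
definition cImp :: "('b, 'c) lt" where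
  "cImp = LAbs (LAbs (LAp (LAp cXi (LAp cK (LB 1))) (LAp cK (LB 0))))"
definition cF :: "('b, 'c) lt" where
  "cF = LAbs (LAbs (LAbs (LAp (LAp cXi (LB 2)) (LAbs (LAp (LB 2) (LAp (LB 1) (LB 0)))))))"

inductive ider :: "('b, 'c) lt set \<Rightarrow> ('b, 'c) lt \<Rightarrow> bool" where
  i_ax:  "t \<in> \<Gamma> \<Longrightarrow> ider \<Gamma> t"
| i_LH:  "ider \<Gamma> (LAp cL cH)"
| i_LA:  "ider \<Gamma> (LAp cL (LC (Abase b)))"
| i_Eq:  "ider \<Gamma> t1 \<Longrightarrow> beq t1 t2 \<Longrightarrow> lc_at 0 t2 \<Longrightarrow> ider \<Gamma> t2"
| i_H:   "ider \<Gamma> t \<Longrightarrow> ider \<Gamma> (LAp cH t)"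
| i_Xe:  "ider \<Gamma> (LAp (LAp cXi t1) t2) \<Longrightarrow> ider \<Gamma> (LAp t1 t3) \<Longrightarrow> ider \<Gamma> (LAp t2 t3)"
| i_Xi:  "ider (insert (LAp t1 (LV x)) \<Gamma>) (LAp t2 (LV x)) \<Longrightarrow> ider \<Gamma> (LAp cL t1) \<Longrightarrow>
          x \<notin> fvls \<Gamma> \<union> fvl t1 \<union> fvl t2 \<Longrightarrow> ider \<Gamma> (LAp (LAp cXi t1) t2)"
| i_XH:  "ider (insert (LAp t1 (LV x)) \<Gamma>) (LAp cH (LAp t2 (LV x))) \<Longrightarrow> ider \<Gamma> (LAp cL t1) \<Longrightarrow>
          x \<notin> fvls \<Gamma> \<union> fvl t1 \<union> fvl t2 \<Longrightarrow> ider \<Gamma> (LAp cH (LAp (LAp cXi t1) t2))"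

definition i0_derivable :: "('b, 'c) lt set \<Rightarrow> ('b, 'c) lt \<Rightarrow> bool" where
  "i0_derivable \<Gamma> t \<longleftrightarrow> (\<exists>\<Gamma>0 \<subseteq> \<Gamma>. finite \<Gamma>0 \<and> ider \<Gamma>0 t)"

primrec At :: "'b ty \<Rightarrow> ('b, 'c) lt" where
  "At To = cH"
| "At (Base b) = LC (Abase b)"
| "At (Arr b \<tau>) = LAp (LAp cF (LC (Abase b))) (At \<tau>)"

primrec tr :: "('b, 'c) pt \<Rightarrow> ('b, 'c) lt" where
  "tr (PV x) = LV x"
| "tr (PB i) = LB i"
| "tr (PC c) = LC (Sig c)"
| "tr (PAp t1 t2) = LAp (tr t1) (tr t2)"
| "tr (PImp \<phi> \<psi>) = LAp (LAp cImp (tr \<phi>)) (tr \<psi>)"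
| "tr (PAll \<tau> \<phi>) = LAp (LAp cXi (At \<tau>)) (LAbs (tr \<phi>))"

text \<open>Gamma(Delta), relative to the choice ysel b of a variable of type b not free in Delta.\<close>
definition GammaD :: "('c \<Rightarrow> 'b ty) \<Rightarrow> ('b \<Rightarrow> 'b var) \<Rightarrow> ('b, 'c) pt set \<Rightarrow> ('b, 'c) lt set" where
  "GammaD ctype ysel \<Delta> =
     {LAp (At (snd x)) (LV x) | x. x \<in> FVs \<Delta>}
   \<union> {LAp (At (ctype c)) (LC (Sig c)) | c. True}
   \<union> {LAp cL (LC (Abase b)) | b. True}
   \<union> {LAp (At (Base b)) (LV (ysel b)) | b. True}"

end

theory Submission
  imports Defs
begin

primrec lsubst :: "('b var \<Rightarrow> ('b,'c) lt) \<Rightarrow> ('b,'c) lt \<Rightarrow> ('b,'c) lt" where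
  "lsubst \<sigma> (LV x) = \<sigma> x"
| "lsubst \<sigma> (LB i) = LB i"
| "lsubst \<sigma> (LC c) = LC c"
| "lsubst \<sigma> (LAp s t) = LAp (lsubst \<sigma> s) (lsubst \<sigma> t)"
| "lsubst \<sigma> (LAbs s) = LAbs (lsubst \<sigma> s)"

lemma lc_mono: "lc_at k t \<Longrightarrow> k \<le> j \<Longrightarrow> lc_at j t"
  by (induction t arbitrary: k j) auto

lemma lift_lc: "lc_at k t \<Longrightarrow> k \<le> j \<Longrightarrow> lift t j = t"
  by (induction t arbitrary: k j) auto

lemma subst_lc: "lc_at k t \<Longrightarrow> k \<le> j \<Longrightarrow> subst t s j = t"
  by (induction t arbitrary: k j s) auto

lemma lift_lc0[simp]: "lc_at 0 t \<Longrightarrow> lift t j = t"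
  using lift_lc by blast

lemma subst_lc0[simp]: "lc_at 0 t \<Longrightarrow> subst t s j = t"
  using subst_lc by blast

definition lcs :: "('b var \<Rightarrow> ('b,'c) lt) \<Rightarrow> bool" where
  "lcs \<sigma> \<longleftrightarrow> (\<forall>v. lc_at 0 (\<sigma> v))"

lemma lsubst_lift: "lcs \<sigma> \<Longrightarrow> lsubst \<sigma> (lift t k) = lift (lsubst \<sigma> t) k"
  by (induction t arbitrary: k) (auto simp: lcs_def)

lemma lsubst_subst: "lcs \<sigma> \<Longrightarrow> lsubst \<sigma> (subst t s k) = subst (lsubst \<sigma> t) (lsubst \<sigma> s) k"
  by (induction t arbitrary: s k) (auto simp: lcs_def lsubst_lift)

lemma beq_lsubst: "beq s t \<Longrightarrow> lcs \<sigma> \<Longrightarrow> beq (lsubst \<sigma> s) (lsubst \<sigma> t)"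
proof (induction rule: beq.induct)
  case (beq_beta s t)
  then show ?case by (simp add: lsubst_subst beq.beq_beta)
next
  case (beq_eta s)
  then show ?case by (simp add: lsubst_lift beq.beq_eta)
qed (auto intro: beq.intros)

lemma lc0: "lc_at 0 t \<Longrightarrow> lc_at k t"
  using lc_mono by blast

lemma lc_lsubst: "lc_at k t \<Longrightarrow> lcs \<sigma> \<Longrightarrow> lc_at k (lsubst \<sigma> t)"
  by (induction t arbitrary: k) (auto simp: lcs_def lc0)

lemma lsubst_agree: "(\<forall>v\<in>fvl t. \<sigma> v = \<tau> v) \<Longrightarrow> lsubst \<sigma> t = lsubst \<tau> t"
  by (induction t) auto

lemma lsubst_id[simp]: "lsubst LV t = t"
  by (induction t) auto

lemma lsubst_closed: "fvl t = {} \<Longrightarrow> lsubst \<sigma> t = t"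
  using lsubst_agree[of t \<sigma> LV] by simp

lemma fvl_lsubst: "fvl (lsubst \<sigma> t) = (\<Union>v\<in>fvl t. fvl (\<sigma> v))"
  by (induction t) auto

lemma finite_fvl[simp]: "finite (fvl t)"
  by (induction t) auto

lemma fvls_insert[simp]: "fvls (insert a G) = fvl a \<union> fvls G"
  by (simp add: fvls_def)
lemma fvls_Un[simp]: "fvls (A \<union> B) = fvls A \<union> fvls B"
  by (simp add: fvls_def)
lemma fvls_mono: "A \<subseteq> B \<Longrightarrow> fvls A \<subseteq> fvls B"
  by (auto simp: fvls_def)
lemma finite_fvls: "finite A \<Longrightarrow> finite (fvls A)"
  by (simp add: fvls_def)

lemma closed_defs[simp]:
  "fvl cI = {}" "fvl cK = {}" "fvl cL = {}" "fvl cXi = {}" "fvl cH = {}" "fvl cImp = {}" "fvl cF = {}"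
  "lc_at k cI" "lc_at k cK" "lc_at k cL" "lc_at k cXi" "lc_at k cH" "lc_at k cImp" "lc_at k cF"
  by (simp_all add: cI_def cK_def cL_def cXi_def cH_def cImp_def cF_def)

lemma At_fvl[simp]: "fvl (At \<tau>) = {}"
  by (induction \<tau>) auto
lemma At_lc[simp]: "lc_at k (At \<tau>)"
  by (induction \<tau>) auto

lemma lsubst_consts[simp]:
  "lsubst \<sigma> cK = cK" "lsubst \<sigma> cL = cL" "lsubst \<sigma> cXi = cXi" "lsubst \<sigma> cH = cH"
  "lsubst \<sigma> cImp = cImp" "lsubst \<sigma> cF = cF" "lsubst \<sigma> (At \<tau>) = At \<tau>"
  by (simp_all add: lsubst_closed)

lemma fresh_var: "finite X \<Longrightarrow> \<exists>n::nat. (n, \<tau>) \<notin> X"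
proof -
  assume "finite X"
  hence "finite (fst ` X)" by simp
  from ex_new_if_finite[OF infinite_UNIV_nat this] obtain n where n: "n \<notin> fst ` X" ..
  have "(n, \<tau>) \<notin> X"
  proof
    assume "(n, \<tau>) \<in> X"
    hence "fst (n, \<tau>) \<in> fst ` X" by (rule imageI)
    with n show False by simp
  qed
  thus ?thesis ..
qed

lemma beta': "u = subst s t 0 \<Longrightarrow> beq (LAp (LAbs s) t) u"
  using beq_beta by simp

lemma beq_K: "lc_at 0 a \<Longrightarrow> beq (LAp (LAp cK a) b) a"
  unfolding cK_def
  by (rule beq_trans[OF beq_app[OF beta' beq_refl] beta']) auto

lemma beq_H: "lc_at 0 a \<Longrightarrow> beq (LAp cH a) (LAp cL (LAp cK a))"
  unfolding cH_def by (rule beta') (simp add: cL_def cK_def)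

lemma beq_Imp: "lc_at 0 a \<Longrightarrow> lc_at 0 b \<Longrightarrow>
   beq (LAp (LAp cImp a) b) (LAp (LAp cXi (LAp cK a)) (LAp cK b))"
  unfolding cImp_def
  by (rule beq_trans[OF beq_app[OF beta' beq_refl] beta']) (auto simp: cXi_def cK_def)

lemma beq_F: "lc_at 0 a \<Longrightarrow> lc_at 0 c \<Longrightarrow> lc_at 0 f \<Longrightarrow>
   beq (LAp (LAp (LAp cF a) c) f) (LAp (LAp cXi a) (LAbs (LAp c (LAp f (LB 0)))))"
  unfolding cF_def
  by (rule beq_trans[OF beq_app[OF beq_trans[OF beq_app[OF beta' beq_refl] beta'] beq_refl] beta'])
     (auto simp: cXi_def)

lemma fresh_var2: "finite (X :: 'b var set) \<Longrightarrow> \<exists>x. x \<notin> X"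
proof -
  assume "finite X"
  from fresh_var[OF this, of To] obtain n where "(n, To) \<notin> X" ..
  thus ?thesis ..
qed

lemma lcs_LV[simp]: "lcs LV" by (simp add: lcs_def)
lemma lcs_upd[simp]: "lcs \<sigma> \<Longrightarrow> lcs (\<sigma>(x := LV y))" by (simp add: lcs_def)

lemma lsubst_upd_fresh: "x \<notin> fvl t \<Longrightarrow> lsubst (\<sigma>(x := s)) t = lsubst \<sigma> t"
  by (rule lsubst_agree) auto

lemma fvls_fresh: "x \<notin> fvls G \<Longrightarrow> g \<in> G \<Longrightarrow> x \<notin> fvl g"
  by (auto simp: fvls_def)

lemma ider_subst:
  "ider G0 t \<Longrightarrow> lcs \<sigma> \<Longrightarrow> finite (fvls G) \<Longrightarrow> lsubst \<sigma> ` G0 \<subseteq> G \<Longrightarrow> ider G (lsubst \<sigma> t)"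
proof (induction arbitrary: \<sigma> G rule: ider.induct)
  case (i_ax t G0)
  then show ?case by (auto intro: ider.i_ax)
next
  case (i_LH G0)
  then show ?case using ider.i_LH by simp
next
  case (i_LA G0 b)
  then show ?case using ider.i_LA by simp
next
  case (i_Eq G0 t1 t2)
  then show ?case by (meson beq_lsubst ider.i_Eq lc_lsubst)
next
  case (i_H G0 t)
  then show ?case using ider.i_H by fastforce
next
  case (i_Xe G0 t1 t2 t3)
  then show ?case using ider.i_Xe[of G "lsubst \<sigma> t1" "lsubst \<sigma> t2" "lsubst \<sigma> t3"] by simp
next
  case (i_Xi t1 x G0 t2)
  obtain x' where n: "x' \<notin> fvls G \<union> fvl (lsubst \<sigma> t1) \<union> fvl (lsubst \<sigma> t2)"
    using fresh_var2[of "fvls G \<union> fvl (lsubst \<sigma> t1) \<union> fvl (lsubst \<sigma> t2)"] i_Xi.prems by auto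
  define \<sigma>' where "\<sigma>' = \<sigma>(x := LV x')"
  have e1: "lsubst \<sigma>' t1 = lsubst \<sigma> t1" "lsubst \<sigma>' t2 = lsubst \<sigma> t2"
    unfolding \<sigma>'_def using i_Xi.hyps(3) by (auto intro: lsubst_upd_fresh)
  have "lsubst \<sigma>' ` insert (LAp t1 (LV x)) G0 \<subseteq> insert (LAp (lsubst \<sigma> t1) (LV x')) G"
  proof
    fix g assume "g \<in> lsubst \<sigma>' ` insert (LAp t1 (LV x)) G0"
    then obtain h where h: "h \<in> insert (LAp t1 (LV x)) G0" "g = lsubst \<sigma>' h" by blast
    show "g \<in> insert (LAp (lsubst \<sigma> t1) (LV x')) G"
    proof (cases "h \<in> G0")
      case True
      hence "x \<notin> fvl h" using i_Xi.hyps(3) fvls_fresh by blast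
      hence "g = lsubst \<sigma> h" unfolding h(2) \<sigma>'_def by (rule lsubst_upd_fresh)
      then show ?thesis using True i_Xi.prems(3) by auto
    next
      case False
      hence "h = LAp t1 (LV x)" using h by auto
      then show ?thesis using h e1 by (simp add: \<sigma>'_def)
    qed
  qed
  note sub = this
  have lc': "lcs \<sigma>'" using i_Xi.prems by (simp add: \<sigma>'_def)
  have sx: "\<sigma>' x = LV x'" by (simp add: \<sigma>'_def)
  have "ider (insert (LAp (lsubst \<sigma> t1) (LV x')) G) (lsubst \<sigma>' (LAp t2 (LV x)))"
    by (rule i_Xi.IH(1)[OF lc' _ sub]) (use i_Xi.prems in simp)
  hence a: "ider (insert (LAp (lsubst \<sigma> t1) (LV x')) G) (LAp (lsubst \<sigma> t2) (LV x'))"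
    using e1 sx by simp
  have b: "ider G (LAp cL (lsubst \<sigma> t1))"
    using i_Xi.IH(2)[of \<sigma> G] i_Xi.prems by simp
  have "ider G (LAp (LAp cXi (lsubst \<sigma> t1)) (lsubst \<sigma> t2))"
    by (rule ider.i_Xi[OF a b]) (use n in auto)
  then show ?case by simp
next
  case (i_XH t1 x G0 t2)
  obtain x' where n: "x' \<notin> fvls G \<union> fvl (lsubst \<sigma> t1) \<union> fvl (lsubst \<sigma> t2)"
    using fresh_var2[of "fvls G \<union> fvl (lsubst \<sigma> t1) \<union> fvl (lsubst \<sigma> t2)"] i_XH.prems by auto
  define \<sigma>' where "\<sigma>' = \<sigma>(x := LV x')"
  have e1: "lsubst \<sigma>' t1 = lsubst \<sigma> t1" "lsubst \<sigma>' t2 = lsubst \<sigma> t2"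
    unfolding \<sigma>'_def using i_XH.hyps(3) by (auto intro: lsubst_upd_fresh)
  have "lsubst \<sigma>' ` insert (LAp t1 (LV x)) G0 \<subseteq> insert (LAp (lsubst \<sigma> t1) (LV x')) G"
  proof
    fix g assume "g \<in> lsubst \<sigma>' ` insert (LAp t1 (LV x)) G0"
    then obtain h where h: "h \<in> insert (LAp t1 (LV x)) G0" "g = lsubst \<sigma>' h" by blast
    show "g \<in> insert (LAp (lsubst \<sigma> t1) (LV x')) G"
    proof (cases "h \<in> G0")
      case True
      hence "x \<notin> fvl h" using i_XH.hyps(3) fvls_fresh by blast
      hence "g = lsubst \<sigma> h" unfolding h(2) \<sigma>'_def by (rule lsubst_upd_fresh)
      then show ?thesis using True i_XH.prems(3) by auto
    next
      case False
      hence "h = LAp t1 (LV x)" using h by auto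
      then show ?thesis using h e1 by (simp add: \<sigma>'_def)
    qed
  qed
  note sub = this
  have lc': "lcs \<sigma>'" using i_XH.prems by (simp add: \<sigma>'_def)
  have sx: "\<sigma>' x = LV x'" by (simp add: \<sigma>'_def)
  have "ider (insert (LAp (lsubst \<sigma> t1) (LV x')) G) (lsubst \<sigma>' (LAp cH (LAp t2 (LV x))))"
    by (rule i_XH.IH(1)[OF lc' _ sub]) (use i_XH.prems in simp)
  hence a: "ider (insert (LAp (lsubst \<sigma> t1) (LV x')) G) (LAp cH (LAp (lsubst \<sigma> t2) (LV x')))"
    using e1 sx by simp
  have b: "ider G (LAp cL (lsubst \<sigma> t1))"
    using i_XH.IH(2)[of \<sigma> G] i_XH.prems by simp
  have "ider G (LAp cH (LAp (LAp cXi (lsubst \<sigma> t1)) (lsubst \<sigma> t2)))"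
    by (rule ider.i_XH[OF a b]) (use n in auto)
  then show ?case by simp
qed

lemma ider_weaken: "ider G0 t \<Longrightarrow> G0 \<subseteq> G \<Longrightarrow> finite (fvls G) \<Longrightarrow> ider G t"
  using ider_subst[of G0 t LV G] by simp


lemma ider_cut:
  "ider G0 t \<Longrightarrow> lcs \<sigma> \<Longrightarrow> finite (fvls G) \<Longrightarrow> (\<forall>g\<in>G0. ider G (lsubst \<sigma> g)) \<Longrightarrow> ider G (lsubst \<sigma> t)"
proof (induction arbitrary: \<sigma> G rule: ider.induct)
  case (i_ax t G0)
  then show ?case by (auto intro: ider.i_ax)
next
  case (i_LH G0)
  then show ?case using ider.i_LH by simp
next
  case (i_LA G0 b)
  then show ?case using ider.i_LA by simp
next
  case (i_Eq G0 t1 t2)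
  then show ?case by (meson beq_lsubst ider.i_Eq lc_lsubst)
next
  case (i_H G0 t)
  then show ?case using ider.i_H by fastforce
next
  case (i_Xe G0 t1 t2 t3)
  then show ?case using ider.i_Xe[of G "lsubst \<sigma> t1" "lsubst \<sigma> t2" "lsubst \<sigma> t3"] by simp
next
  case (i_Xi t1 x G0 t2)
  obtain x' where n: "x' \<notin> fvls G \<union> fvl (lsubst \<sigma> t1) \<union> fvl (lsubst \<sigma> t2)"
    using fresh_var2[of "fvls G \<union> fvl (lsubst \<sigma> t1) \<union> fvl (lsubst \<sigma> t2)"] i_Xi.prems by auto
  define \<sigma>' where "\<sigma>' = \<sigma>(x := LV x')"
  have e1: "lsubst \<sigma>' t1 = lsubst \<sigma> t1" "lsubst \<sigma>' t2 = lsubst \<sigma> t2"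
    unfolding \<sigma>'_def using i_Xi.hyps(3) by (auto intro: lsubst_upd_fresh)
  have "\<forall>g\<in>insert (LAp t1 (LV x)) G0. ider (insert (LAp (lsubst \<sigma> t1) (LV x')) G) (lsubst \<sigma>' g)"
  proof
    fix h assume h: "h \<in> insert (LAp t1 (LV x)) G0"
    show "ider (insert (LAp (lsubst \<sigma> t1) (LV x')) G) (lsubst \<sigma>' h)"
    proof (cases "h \<in> G0")
      case True
      hence "x \<notin> fvl h" using i_Xi.hyps(3) fvls_fresh by blast
      hence "lsubst \<sigma>' h = lsubst \<sigma> h" unfolding \<sigma>'_def by (rule lsubst_upd_fresh)
      moreover have "ider G (lsubst \<sigma> h)" using True i_Xi.prems(3) by blast
      ultimately show ?thesis using i_Xi.prems(2) by (auto intro: ider_weaken)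
    next
      case False
      hence "h = LAp t1 (LV x)" using h by auto
      then show ?thesis using e1 by (simp add: \<sigma>'_def ider.i_ax)
    qed
  qed
  note sub = this
  have lc': "lcs \<sigma>'" using i_Xi.prems by (simp add: \<sigma>'_def)
  have sx: "\<sigma>' x = LV x'" by (simp add: \<sigma>'_def)
  have "ider (insert (LAp (lsubst \<sigma> t1) (LV x')) G) (lsubst \<sigma>' (LAp t2 (LV x)))"
    by (rule i_Xi.IH(1)[OF lc' _ sub]) (use i_Xi.prems in simp)
  hence a: "ider (insert (LAp (lsubst \<sigma> t1) (LV x')) G) (LAp (lsubst \<sigma> t2) (LV x'))"
    using e1 sx by simp
  have b: "ider G (LAp cL (lsubst \<sigma> t1))"
    using i_Xi.IH(2)[of \<sigma> G] i_Xi.prems by simp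
  have "ider G (LAp (LAp cXi (lsubst \<sigma> t1)) (lsubst \<sigma> t2))"
    by (rule ider.i_Xi[OF a b]) (use n in auto)
  then show ?case by simp
next
  case (i_XH t1 x G0 t2)
  obtain x' where n: "x' \<notin> fvls G \<union> fvl (lsubst \<sigma> t1) \<union> fvl (lsubst \<sigma> t2)"
    using fresh_var2[of "fvls G \<union> fvl (lsubst \<sigma> t1) \<union> fvl (lsubst \<sigma> t2)"] i_XH.prems by auto
  define \<sigma>' where "\<sigma>' = \<sigma>(x := LV x')"
  have e1: "lsubst \<sigma>' t1 = lsubst \<sigma> t1" "lsubst \<sigma>' t2 = lsubst \<sigma> t2"
    unfolding \<sigma>'_def using i_XH.hyps(3) by (auto intro: lsubst_upd_fresh)
  have "\<forall>g\<in>insert (LAp t1 (LV x)) G0. ider (insert (LAp (lsubst \<sigma> t1) (LV x')) G) (lsubst \<sigma>' g)"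
  proof
    fix h assume h: "h \<in> insert (LAp t1 (LV x)) G0"
    show "ider (insert (LAp (lsubst \<sigma> t1) (LV x')) G) (lsubst \<sigma>' h)"
    proof (cases "h \<in> G0")
      case True
      hence "x \<notin> fvl h" using i_XH.hyps(3) fvls_fresh by blast
      hence "lsubst \<sigma>' h = lsubst \<sigma> h" unfolding \<sigma>'_def by (rule lsubst_upd_fresh)
      moreover have "ider G (lsubst \<sigma> h)" using True i_XH.prems(3) by blast
      ultimately show ?thesis using i_XH.prems(2) by (auto intro: ider_weaken)
    next
      case False
      hence "h = LAp t1 (LV x)" using h by auto
      then show ?thesis using e1 by (simp add: \<sigma>'_def ider.i_ax)
    qed
  qed
  note sub = this
  have lc': "lcs \<sigma>'" using i_XH.prems by (simp add: \<sigma>'_def)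
  have sx: "\<sigma>' x = LV x'" by (simp add: \<sigma>'_def)
  have "ider (insert (LAp (lsubst \<sigma> t1) (LV x')) G) (lsubst \<sigma>' (LAp cH (LAp t2 (LV x))))"
    by (rule i_XH.IH(1)[OF lc' _ sub]) (use i_XH.prems in simp)
  hence a: "ider (insert (LAp (lsubst \<sigma> t1) (LV x')) G) (LAp cH (LAp (lsubst \<sigma> t2) (LV x')))"
    using e1 sx by simp
  have b: "ider G (LAp cL (lsubst \<sigma> t1))"
    using i_XH.IH(2)[of \<sigma> G] i_XH.prems by simp
  have "ider G (LAp cH (LAp (LAp cXi (lsubst \<sigma> t1)) (lsubst \<sigma> t2)))"
    by (rule ider.i_XH[OF a b]) (use n in auto)
  then show ?case by simp
qed


lemma ider_compact: "ider G t \<Longrightarrow> \<exists>G0\<subseteq>G. finite G0 \<and> ider G0 t"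
proof (induction rule: ider.induct)
  case (i_ax t G)
  then show ?case by (intro exI[of _ "{t}"]) (auto intro: ider.i_ax)
next
  case (i_LH G)
  then show ?case by (intro exI[of _ "{}"]) (auto intro: ider.i_LH)
next
  case (i_LA G b)
  then show ?case by (intro exI[of _ "{}"]) (auto intro: ider.i_LA)
next
  case (i_Eq G t1 t2)
  then show ?case by (meson ider.i_Eq)
next
  case (i_H G t)
  then show ?case by (meson ider.i_H)
next
  case (i_Xe G t1 t2 t3)
  then obtain A B where AB: "A \<subseteq> G" "finite A" "ider A (LAp (LAp cXi t1) t2)"
    "B \<subseteq> G" "finite B" "ider B (LAp t1 t3)" by blast
  have f: "finite (fvls (A \<union> B))" using AB by (simp add: finite_fvls)
  have "ider (A \<union> B) (LAp t2 t3)"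
    by (rule ider.i_Xe[OF ider_weaken[OF AB(3) _ f] ider_weaken[OF AB(6) _ f]]) auto
  then show ?case using AB by (intro exI[of _ "A \<union> B"]) auto
next
  case (i_Xi t1 x G t2)
  then obtain A B where AB: "A \<subseteq> insert (LAp t1 (LV x)) G" "finite A" "ider A (LAp t2 (LV x))"
    "B \<subseteq> G" "finite B" "ider B (LAp cL t1)" by blast
  define C where "C = (A - {LAp t1 (LV x)}) \<union> B"
  have C: "C \<subseteq> G" "finite C" using AB by (auto simp: C_def)
  have f: "finite (fvls (insert (LAp t1 (LV x)) C))" using C by (simp add: finite_fvls)
  have f2: "finite (fvls C)" using C by (simp add: finite_fvls)
  have "x \<notin> fvls C" using fvls_mono[OF C(1)] i_Xi.hyps(3) by blast
  hence "ider C (LAp (LAp cXi t1) t2)"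
    using ider.i_Xi[OF ider_weaken[OF AB(3) _ f] ider_weaken[OF AB(6) _ f2]] i_Xi.hyps(3)
    by (auto simp: C_def)
  then show ?case using C by blast
next
  case (i_XH t1 x G t2)
  then obtain A B where AB: "A \<subseteq> insert (LAp t1 (LV x)) G" "finite A" "ider A (LAp cH (LAp t2 (LV x)))"
    "B \<subseteq> G" "finite B" "ider B (LAp cL t1)" by blast
  define C where "C = (A - {LAp t1 (LV x)}) \<union> B"
  have C: "C \<subseteq> G" "finite C" using AB by (auto simp: C_def)
  have f: "finite (fvls (insert (LAp t1 (LV x)) C))" using C by (simp add: finite_fvls)
  have f2: "finite (fvls C)" using C by (simp add: finite_fvls)
  have "x \<notin> fvls C" using fvls_mono[OF C(1)] i_XH.hyps(3) by blast
  hence "ider C (LAp cH (LAp (LAp cXi t1) t2))"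
    using ider.i_XH[OF ider_weaken[OF AB(3) _ f] ider_weaken[OF AB(6) _ f2]] i_XH.hyps(3)
    by (auto simp: C_def)
  then show ?case using C by blast
qed

primrec psz :: "('b,'c) pt \<Rightarrow> nat" where
  "psz (PV x) = 0" | "psz (PB i) = 0" | "psz (PC c) = 0"
| "psz (PAp s t) = Suc (psz s + psz t)" | "psz (PImp s t) = Suc (psz s + psz t)"
| "psz (PAll \<sigma> t) = Suc (psz t)"

lemma psz_open[simp]: "psz (openp k (PV x) \<phi>) = psz \<phi>"
  by (induction \<phi> arbitrary: k) auto

lemma fvl_tr[simp]: "fvl (tr \<phi>) = fvp \<phi>"
  by (induction \<phi>) auto

lemma finite_fvp[simp]: "finite (fvp \<phi>)"
  by (induction \<phi>) auto

lemma fvp_open1: "fvp \<phi> \<subseteq> fvp (openp k t \<phi>)"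
  by (induction \<phi> arbitrary: k) auto
lemma fvp_open2: "fvp (openp k t \<phi>) \<subseteq> fvp \<phi> \<union> fvp t"
  by (induction \<phi> arbitrary: k) auto
lemma fvp_close[simp]: "fvp (closep k x \<phi>) = fvp \<phi> - {x}"
  by (induction \<phi> arbitrary: k) auto

lemma typed_weak: "typed ctype Ts t \<tau> \<Longrightarrow> typed ctype (Ts @ Vs) t \<tau>"
proof (induction rule: typed.induct)
  case (t_bnd i Ts)
  then show ?case using typed.t_bnd[of i "Ts @ Vs"] by (simp add: nth_append)
qed (auto intro: typed.intros)

lemma typed_lc: "typed ctype Ts t \<tau> \<Longrightarrow> lc_at (length Ts) (tr t)"
  by (induction rule: typed.induct) auto

lemma typed_open: "typed ctype Ts \<phi> \<tau>' \<Longrightarrow> Ts = Us @ [\<sigma>] \<Longrightarrow> typed ctype [] t \<sigma> \<Longrightarrow>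
   typed ctype Us (openp (length Us) t \<phi>) \<tau>'"
proof (induction arbitrary: Us rule: typed.induct)
  case (t_bnd i Ts)
  show ?case
  proof (cases "i = length Us")
    case True
    then show ?thesis using t_bnd typed_weak[of ctype "[]" t \<sigma> Us] by simp
  next
    case False
    then show ?thesis using t_bnd typed.t_bnd[of i Us] by (simp add: nth_append)
  qed
next
  case (t_all \<sigma>' Ts \<phi>)
  then show ?case using typed.t_all[of \<sigma>' ctype Us] by fastforce
qed (auto intro: typed.intros)

lemma typed_close: "typed ctype Us \<phi> \<tau>' \<Longrightarrow> snd x = \<sigma> \<Longrightarrow>
   typed ctype (Us @ [\<sigma>]) (closep (length Us) x \<phi>) \<tau>'"
proof (induction rule: typed.induct)
  case (t_var Ts n \<tau>)
  then show ?case using typed.t_bnd[of "length Ts" "Ts @ [\<sigma>]"] by (auto intro: typed.intros)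
next
  case (t_bnd i Ts)
  then show ?case using typed.t_bnd[of i "Ts @ [\<sigma>]"] by (simp add: nth_append)
next
  case (t_all \<sigma>' Ts \<phi>)
  then show ?case using typed.t_all[of \<sigma>' ctype "Ts @ [\<sigma>]"] by fastforce
qed (auto intro: typed.intros)

lemma tr_open: "lc_at 0 (tr t) \<Longrightarrow> lc_at (Suc k) (tr \<phi>) \<Longrightarrow> subst (tr \<phi>) (tr t) k = tr (openp k t \<phi>)"
  by (induction \<phi> arbitrary: k) auto

lemma tr_close: "lc_at k (tr \<phi>) \<Longrightarrow> lc_at 0 s \<Longrightarrow>
   subst (tr (closep k x \<phi>)) s k = lsubst (LV(x := s)) (tr \<phi>)"
  by (induction \<phi> arbitrary: k) auto

inductive_cases typed_PImpE: "typed ctype Ts (PImp \<phi> \<psi>) \<tau>"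
inductive_cases typed_PAllE: "typed ctype Ts (PAll \<sigma> \<phi>) \<tau>"
inductive_cases typed_PApE: "typed ctype Ts (PAp s t) \<tau>"
inductive_cases typed_PVE: "typed ctype Ts (PV x) \<tau>"
inductive_cases typed_PBE: "typed ctype Ts (PB i) \<tau>"
inductive_cases typed_PCE: "typed ctype Ts (PC c) \<tau>"

lemma pder_formula: "pder ctype \<Delta> \<phi> \<Longrightarrow> \<forall>\<delta>\<in>\<Delta>. formula ctype \<delta> \<Longrightarrow> formula ctype \<phi>"
proof (induction rule: pder.induct)
  case (p_impI \<phi> \<Delta> \<psi>)
  then show ?case by (auto simp: formula_def intro: typed.t_imp)
next
  case (p_mp \<Delta> \<phi> \<psi>)
  then show ?case by (auto simp: formula_def elim: typed_PImpE)
next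
  case (p_allI \<Delta> \<phi> x n \<tau>)
  then show ?case using typed_close[of ctype "[]" \<phi> To x \<tau>]
    by (auto simp: formula_def intro: typed.t_all)
next
  case (p_allE \<Delta> \<tau> \<phi> t)
  then show ?case using typed_open[of ctype "[\<tau>]" \<phi> To "[]" \<tau> t]
    by (auto simp: formula_def term_of_def elim!: typed_PAllE)
qed auto

definition AxC :: "('c \<Rightarrow> 'b ty) \<Rightarrow> ('b,'c) lt set" where
  "AxC ctype = {LAp (At (ctype c)) (LC (Sig c)) | c. True} \<union> {LAp cL (LC (Abase b)) | b. True}"

definition Avar :: "'b var \<Rightarrow> ('b,'c) lt" where
  "Avar x = LAp (At (snd x)) (LV x)"

lemma fvl_Avar[simp]: "fvl (Avar x) = {x}" by (simp add: Avar_def)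

lemma L_At: "\<sigma> = To \<or> (\<exists>b. \<sigma> = Base b) \<Longrightarrow> ider G (LAp cL (At \<sigma>))"
  using ider.i_LH ider.i_LA by fastforce

lemma typed_A: "typed ctype [] t \<tau> \<Longrightarrow> AxC ctype \<subseteq> G \<Longrightarrow> Avar ` fvp t \<subseteq> G \<Longrightarrow> finite (fvls G)
   \<Longrightarrow> ider G (LAp (At \<tau>) (tr t))"
proof (induction "psz t" arbitrary: t \<tau> G rule: less_induct)
  case less
  show ?case
  proof (cases t)
    case (PV x)
    obtain n \<tau>' where x: "x = (n, \<tau>')" by (cases x)
    have "\<tau> = \<tau>'" using less.prems(1) unfolding PV x by (auto elim: typed_PVE)
    then show ?thesis using less.prems(3) PV x by (auto simp: Avar_def intro: ider.i_ax)
  next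
    case (PB i)
    then show ?thesis using less.prems(1) by (auto elim: typed_PBE)
  next
    case (PC c)
    then show ?thesis using less.prems(1,2) by (auto simp: AxC_def elim!: typed_PCE intro: ider.i_ax)
  next
    case (PAp t1 t2)
    obtain \<sigma> where ty: "typed ctype [] t1 (Arr \<sigma> \<tau>)" "typed ctype [] t2 (Base \<sigma>)"
      using less.prems(1) unfolding PAp by (auto elim: typed_PApE)
    have lc1: "lc_at 0 (tr t1)" "lc_at 0 (tr t2)" using ty typed_lc by fastforce+
    have h1: "ider G (LAp (At (Arr \<sigma> \<tau>)) (tr t1))"
      using less.hyps[of t1 "Arr \<sigma> \<tau>" G] less.prems ty PAp by auto
    have h2: "ider G (LAp (At (Base \<sigma>)) (tr t2))"
      using less.hyps[of t2 "Base \<sigma>" G] less.prems ty PAp by auto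
    have "ider G (LAp (LAp cXi (LC (Abase \<sigma>))) (LAbs (LAp (At \<tau>) (LAp (tr t1) (LB 0)))))"
    proof (rule ider.i_Eq[OF h1])
      show "beq (LAp (At (Arr \<sigma> \<tau>)) (tr t1)) (LAp (LAp cXi (LC (Abase \<sigma>))) (LAbs (LAp (At \<tau>) (LAp (tr t1) (LB 0)))))"
        using beq_F[of "LC (Abase \<sigma>)" "At \<tau>" "tr t1"] lc1 by simp
      have "lc_at 1 (tr t1)" using lc0 lc1 by blast
      then show "lc_at 0 (LAp (LAp cXi (LC (Abase \<sigma>))) (LAbs (LAp (At \<tau>) (LAp (tr t1) (LB 0)))))" by simp
    qed
    from ider.i_Xe[OF this] h2
    have "ider G (LAp (LAbs (LAp (At \<tau>) (LAp (tr t1) (LB 0)))) (tr t2))" by simp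
    then show ?thesis
      by (rule ider.i_Eq) (use lc1 PAp in \<open>auto intro: beta'\<close>)
  next
    case (PImp \<phi> \<psi>)
    have ty: "typed ctype [] \<phi> To" "typed ctype [] \<psi> To" "\<tau> = To"
      using less.prems(1) unfolding PImp by (auto elim: typed_PImpE)
    have lc1: "lc_at 0 (tr \<phi>)" "lc_at 0 (tr \<psi>)" using ty typed_lc by fastforce+
    have h1: "ider G (LAp cH (tr \<phi>))"
      using less.hyps[of \<phi> To G] less.prems ty PImp by auto
    obtain x where x: "x \<notin> fvls G \<union> fvp \<phi> \<union> fvp \<psi>"
      using fresh_var2[of "fvls G \<union> fvp \<phi> \<union> fvp \<psi>"] less.prems by auto
    let ?G = "insert (LAp (LAp cK (tr \<phi>)) (LV x)) G"
    have h2: "ider ?G (LAp cH (tr \<psi>))"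
      using less.hyps[of \<psi> To ?G] less.prems ty PImp by auto
    have h2': "ider ?G (LAp cH (LAp (LAp cK (tr \<psi>)) (LV x)))"
      by (rule ider.i_Eq[OF h2]) (use lc1 in \<open>auto intro: beq_app beq_refl beq_sym beq_K\<close>)
    have h1': "ider G (LAp cL (LAp cK (tr \<phi>)))"
      by (rule ider.i_Eq[OF h1]) (use lc1 in \<open>auto intro: beq_H\<close>)
    have "ider G (LAp cH (LAp (LAp cXi (LAp cK (tr \<phi>))) (LAp cK (tr \<psi>))))"
      by (rule ider.i_XH[OF h2' h1']) (use x in auto)
    then show ?thesis
      by (rule ider.i_Eq) (use lc1 ty PImp in \<open>auto intro: beq_app beq_refl beq_sym beq_Imp\<close>)
  next
    case (PAll \<sigma> \<phi>)
    have ty: "\<sigma> = To \<or> (\<exists>b. \<sigma> = Base b)" "typed ctype [\<sigma>] \<phi> To" "\<tau> = To"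
      using less.prems(1) unfolding PAll by (auto elim: typed_PAllE)
    have lc1: "lc_at 1 (tr \<phi>)" using ty typed_lc by fastforce
    obtain n where n: "(n, \<sigma>) \<notin> fvls G \<union> fvp \<phi>"
      using fresh_var[of "fvls G \<union> fvp \<phi>" \<sigma>] less.prems by auto
    define x where "x = (n, \<sigma>)"
    have sx: "snd x = \<sigma>" by (simp add: x_def)
    let ?G = "insert (Avar x) G"
    have tyo: "typed ctype [] (openp 0 (PV x) \<phi>) To"
      using typed_open[of ctype "[\<sigma>]" \<phi> To "[]" \<sigma> "PV x"] ty(2) typed.t_var[of ctype "[]" n \<sigma>]
      by (simp add: x_def)
    have "Avar ` fvp (openp 0 (PV x) \<phi>) \<subseteq> ?G"
      using fvp_open2[of 0 "PV x" \<phi>] less.prems(3) PAll by auto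
    hence h: "ider ?G (LAp cH (tr (openp 0 (PV x) \<phi>)))"
      using less.hyps[of "openp 0 (PV x) \<phi>" To ?G] less.prems tyo PAll by auto
    have eq: "tr (openp 0 (PV x) \<phi>) = subst (tr \<phi>) (LV x) 0"
      using tr_open[of "PV x" 0 \<phi>] lc1 by simp
    have h': "ider ?G (LAp cH (LAp (LAbs (tr \<phi>)) (LV x)))"
      by (rule ider.i_Eq[OF h]) (use lc1 eq in \<open>auto intro: beq_app beq_refl beq_sym beq_beta\<close>)
    have "ider G (LAp cH (LAp (LAp cXi (At \<sigma>)) (LAbs (tr \<phi>))))"
      by (rule ider.i_XH[OF h'[unfolded Avar_def sx] L_At[OF ty(1)]]) (use n x_def in auto)
    then show ?thesis using PAll ty by simp
  qed
qed

primrec W :: "('b \<Rightarrow> 'b var) \<Rightarrow> 'b ty \<Rightarrow> ('b,'c) lt" where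
  "W ysel To = LAp cL cH" | "W ysel (Base b) = LV (ysel b)" | "W ysel (Arr b \<tau>) = LAbs (W ysel \<tau>)"

lemma lcW[simp]: "lc_at k (W ysel \<tau>)"
  by (induction \<tau> arbitrary: k) auto

lemma W_der:
  fixes G :: "('b,'c) lt set" and ysel :: "'b \<Rightarrow> 'b var"
  shows "\<forall>b. snd (ysel b) = Base b \<Longrightarrow> \<forall>b. Avar (ysel b) \<in> G \<Longrightarrow> finite (fvls G)
  \<Longrightarrow> ider G (LAp (At \<tau>) (W ysel \<tau>))"
proof (induction \<tau> arbitrary: G)
  case To
  then show ?case using ider.i_H[OF ider.i_LH] by simp
next
  case (Base b)
  then show ?case using ider.i_ax[of "Avar (ysel b)" G] by (simp add: Avar_def)
next
  case (Arr b \<tau>)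
  obtain x where x: "x \<notin> fvls G \<union> fvl (W ysel \<tau> :: ('b,'c) lt)"
    using fresh_var2[of "fvls G \<union> fvl (W ysel \<tau> :: ('b,'c) lt)"] Arr.prems by auto
  let ?a = "LC (Abase b) :: ('b,'c) lt"
  let ?G = "insert (LAp ?a (LV x)) G"
  have h: "ider ?G (LAp (At \<tau>) (W ysel \<tau>))"
    using Arr.IH[of ?G] Arr.prems by auto
  have b1: "beq (LAp (LAbs (LAp (At \<tau>) (LAp (LAbs (W ysel \<tau>)) (LB 0)))) (LV x)) (LAp (At \<tau>) (W ysel \<tau>))"
    by (rule beq_trans[OF beta' beq_app[OF beq_refl beta']]) auto
  have h': "ider ?G (LAp (LAbs (LAp (At \<tau>) (LAp (LAbs (W ysel \<tau>)) (LB 0)))) (LV x))"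
    by (rule ider.i_Eq[OF h beq_sym[OF b1]]) simp
  have "ider G (LAp (LAp cXi ?a) (LAbs (LAp (At \<tau>) (LAp (LAbs (W ysel \<tau>)) (LB 0)))))"
    by (rule ider.i_Xi[OF h' ider.i_LA]) (use x in auto)
  then have "ider G (LAp (LAp (LAp cF ?a) (At \<tau>)) (LAbs (W ysel \<tau>)))"
    by (rule ider.i_Eq[OF _ beq_sym[OF beq_F]]) auto
  then show ?case by simp
qed

definition Gs :: "('c \<Rightarrow> 'b ty) \<Rightarrow> ('b,'c) pt set \<Rightarrow> 'b var set \<Rightarrow> ('b,'c) lt set" where
  "Gs ctype \<Delta> S = tr ` \<Delta> \<union> AxC ctype \<union> Avar ` S"

lemma fvls_Gs: "fvls (Gs ctype \<Delta> S) = FVs \<Delta> \<union> S"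
  by (auto simp: Gs_def fvls_def FVs_def AxC_def)

lemma finite_FVs: "finite \<Delta> \<Longrightarrow> finite (FVs \<Delta>)"
  by (simp add: FVs_def)

lemma fin_Gs: "finite \<Delta> \<Longrightarrow> finite S \<Longrightarrow> finite (fvls (Gs ctype \<Delta> S))"
  by (simp add: fvls_Gs finite_FVs)

lemma AxC_Gs: "AxC ctype \<subseteq> Gs ctype \<Delta> S" by (auto simp: Gs_def)
lemma Avar_Gs: "Avar ` S \<subseteq> Gs ctype \<Delta> S" by (auto simp: Gs_def)

lemma elim:
  fixes ctype :: "'c \<Rightarrow> 'b ty" and \<Delta> :: "('b,'c) pt set" and ysel :: "'b \<Rightarrow> 'b var"
  shows "finite \<Delta> \<Longrightarrow> finite S \<Longrightarrow> FVs \<Delta> \<subseteq> S \<Longrightarrow> range ysel \<subseteq> S \<Longrightarrow>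
  \<forall>b. snd (ysel b) = Base b \<Longrightarrow> fvl t \<subseteq> S \<Longrightarrow> ider (Gs ctype \<Delta> (S \<union> S')) t \<Longrightarrow> ider (Gs ctype \<Delta> S) t"
proof -
  assume fD: "finite \<Delta>" and fS: "finite S" and DS: "FVs \<Delta> \<subseteq> S" and yS: "range ysel \<subseteq> S"
    and ys: "\<forall>b. snd (ysel b) = Base b" and tS: "fvl t \<subseteq> S" and d: "ider (Gs ctype \<Delta> (S \<union> S')) t"
  define \<sigma> where "\<sigma> = (\<lambda>z. if z \<in> S then LV z else W ysel (snd z) :: ('b,'c) lt)"
  have lc: "lcs \<sigma>" by (simp add: lcs_def \<sigma>_def)
  have agree: "lsubst \<sigma> u = u" if uS: "fvl u \<subseteq> S" for u
  proof -
    have "\<forall>v\<in>fvl u. \<sigma> v = LV v" using uS by (auto simp: \<sigma>_def)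
    thus ?thesis using lsubst_agree[of u \<sigma> LV] by simp
  qed
  have fin: "finite (fvls (Gs ctype \<Delta> S))" using fD fS by (rule fin_Gs)
  have "ider (Gs ctype \<Delta> S) (lsubst \<sigma> t)"
  proof (rule ider_cut[OF d lc fin], rule ballI)
    fix g assume g: "g \<in> Gs ctype \<Delta> (S \<union> S')"
    show "ider (Gs ctype \<Delta> S) (lsubst \<sigma> g)"
    proof (cases "g \<in> tr ` \<Delta> \<union> AxC ctype \<or> g \<in> Avar ` S")
      case True
      hence "fvl g \<subseteq> S \<and> g \<in> Gs ctype \<Delta> S" using DS
        by (auto simp: Gs_def AxC_def FVs_def) blast+
      then show ?thesis using agree by (auto intro: ider.i_ax)
    next
      case False
      then obtain z where z: "z \<notin> S" "g = Avar z" using g by (auto simp: Gs_def)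
      have "lsubst \<sigma> g = LAp (At (snd z)) (W ysel (snd z))" using z by (simp add: Avar_def \<sigma>_def)
      moreover have "ider (Gs ctype \<Delta> S) (LAp (At (snd z)) (W ysel (snd z)))"
        by (rule W_der[OF ys _ fin]) (use yS in \<open>auto simp: Gs_def\<close>)
      ultimately show ?thesis by simp
    qed
  qed
  then show ?thesis using agree[OF tS] by simp
qed

lemma fresh_ex: "finite (X :: 'b var set) \<Longrightarrow> (\<And>x. x \<notin> X \<Longrightarrow> P) \<Longrightarrow> P"
  using fresh_var2 by blast

lemma Gs_insert: "Gs ctype (insert \<phi> \<Delta>) S = insert (tr \<phi>) (Gs ctype \<Delta> S)"
  by (auto simp: Gs_def)

lemma FVs_insert[simp]: "FVs (insert \<phi> \<Delta>) = fvp \<phi> \<union> FVs \<Delta>"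
  by (simp add: FVs_def)

lemma formula_lc: "formula ctype \<phi> \<Longrightarrow> lc_at 0 (tr \<phi>)"
  unfolding formula_def using typed_lc by fastforce

lemma main:
  fixes ctype :: "'c \<Rightarrow> 'b ty" and \<Delta> :: "('b,'c) pt set" and ysel :: "'b \<Rightarrow> 'b var"
  shows "pder ctype \<Delta> \<phi> \<Longrightarrow> finite \<Delta> \<Longrightarrow> \<forall>\<delta>\<in>\<Delta>. formula ctype \<delta> \<Longrightarrow> \<forall>b. snd (ysel b) = Base b \<Longrightarrow>
   finite S \<Longrightarrow> FVs \<Delta> \<union> fvp \<phi> \<union> range ysel \<subseteq> S \<Longrightarrow> ider (Gs ctype \<Delta> S) (tr \<phi>)"
proof (induction arbitrary: S rule: pder.induct)
  case (p_ax \<phi> \<Delta>)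
  then show ?case by (auto simp: Gs_def intro: ider.i_ax)
next
  case (p_impI \<phi> \<Delta> \<psi>)
  have "\<forall>\<delta>\<in>insert \<phi> \<Delta>. formula ctype \<delta>" using p_impI.prems(2) p_impI.hyps(1) by blast
  hence fi: "formula ctype \<phi>" "formula ctype \<psi>"
    using p_impI.hyps(1) pder_formula[OF p_impI.hyps(2)] by blast+
  have lc1: "lc_at 0 (tr \<phi>)" "lc_at 0 (tr \<psi>)" using fi formula_lc by auto
  have fin: "finite (fvls (Gs ctype \<Delta> S))" using p_impI.prems by (simp add: fin_Gs)
  have sub: "FVs (insert \<phi> \<Delta>) \<union> fvp \<psi> \<union> range ysel \<subseteq> S" using p_impI.prems(5) by auto
  have ih: "ider (Gs ctype (insert \<phi> \<Delta>) S) (tr \<psi>)"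
    by (rule p_impI.IH[OF _ _ p_impI.prems(3,4) sub]) (use p_impI.prems(1,2) fi in auto)
  obtain x where x: "x \<notin> fvls (Gs ctype \<Delta> S) \<union> fvp \<phi> \<union> fvp \<psi>"
  proof (rule fresh_ex)
    show "finite (fvls (Gs ctype \<Delta> S) \<union> fvp \<phi> \<union> fvp \<psi>)" using fin by simp
  qed
  let ?G = "insert (LAp (LAp cK (tr \<phi>)) (LV x)) (Gs ctype \<Delta> S)"
  have fin2: "finite (fvls ?G)" using fin by simp
  have "ider ?G (lsubst LV (tr \<psi>))"
  proof (rule ider_cut[OF ih lcs_LV fin2], rule ballI)
    fix g assume "g \<in> Gs ctype (insert \<phi> \<Delta>) S"
    hence "g = tr \<phi> \<or> g \<in> Gs ctype \<Delta> S" by (simp add: Gs_insert)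
    then show "ider ?G (lsubst LV g)"
    proof
      assume "g = tr \<phi>"
      then show ?thesis using ider.i_Eq[OF ider.i_ax[of "LAp (LAp cK (tr \<phi>)) (LV x)" ?G] beq_K] lc1
        by auto
    qed (simp add: ider.i_ax)
  qed
  hence h: "ider ?G (LAp (LAp cK (tr \<psi>)) (LV x))"
    by (intro ider.i_Eq[OF _ beq_sym[OF beq_K]]) (use lc1 in auto)
  have "Avar ` fvp \<phi> \<subseteq> Gs ctype \<Delta> S" using Avar_Gs p_impI.prems(5) by fastforce
  hence H: "ider (Gs ctype \<Delta> S) (LAp cH (tr \<phi>))"
    using typed_A[of ctype \<phi> To "Gs ctype \<Delta> S", OF _ AxC_Gs _ fin] fi(1)
    by (simp add: formula_def)
  have L: "ider (Gs ctype \<Delta> S) (LAp cL (LAp cK (tr \<phi>)))"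
    by (rule ider.i_Eq[OF H beq_H]) (use lc1 in auto)
  have "ider (Gs ctype \<Delta> S) (LAp (LAp cXi (LAp cK (tr \<phi>))) (LAp cK (tr \<psi>)))"
    by (rule ider.i_Xi[OF h L]) (use x in auto)
  then have "ider (Gs ctype \<Delta> S) (LAp (LAp cImp (tr \<phi>)) (tr \<psi>))"
    by (rule ider.i_Eq[OF _ beq_sym[OF beq_Imp]]) (use lc1 in auto)
  then show ?case by simp
next
  case (p_mp \<Delta> \<phi> \<psi>)
  let ?S = "S \<union> fvp \<phi>"
  have fi: "formula ctype (PImp \<phi> \<psi>)" using pder_formula[OF p_mp.hyps(2)] p_mp.prems by auto
  hence fi2: "formula ctype \<phi>" "formula ctype \<psi>" by (auto simp: formula_def elim: typed_PImpE)
  have lc1: "lc_at 0 (tr \<phi>)" "lc_at 0 (tr \<psi>)" using fi2 formula_lc by auto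
  have fS: "finite ?S" using p_mp.prems(4) by simp
  have sub1: "FVs \<Delta> \<union> fvp \<phi> \<union> range ysel \<subseteq> ?S" using p_mp.prems(5) by blast
  have sub2: "FVs \<Delta> \<union> fvp (PImp \<phi> \<psi>) \<union> range ysel \<subseteq> ?S" using p_mp.prems(5) by auto
  have ih1: "ider (Gs ctype \<Delta> ?S) (tr \<phi>)" by (rule p_mp.IH(1)[OF p_mp.prems(1-3) fS sub1])
  have ih2: "ider (Gs ctype \<Delta> ?S) (tr (PImp \<phi> \<psi>))" by (rule p_mp.IH(2)[OF p_mp.prems(1-3) fS sub2])
  have a: "ider (Gs ctype \<Delta> ?S) (LAp (LAp cXi (LAp cK (tr \<phi>))) (LAp cK (tr \<psi>)))"
    by (rule ider.i_Eq[OF ih2]) (use lc1 beq_Imp in auto)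
  have b: "ider (Gs ctype \<Delta> ?S) (LAp (LAp cK (tr \<phi>)) (tr \<phi>))"
    by (rule ider.i_Eq[OF ih1 beq_sym[OF beq_K]]) (use lc1 in auto)
  have d: "ider (Gs ctype \<Delta> ?S) (tr \<psi>)"
    by (rule ider.i_Eq[OF ider.i_Xe[OF a b] beq_K]) (use lc1 in auto)
  show ?case
    by (rule elim[of \<Delta> S ysel "tr \<psi>" ctype "fvp \<phi>", OF p_mp.prems(1,4) _ _ p_mp.prems(3) _ d]) (use p_mp.prems(5) in auto)
next
  case (p_allI \<Delta> \<phi> x n \<tau>)
  have fi: "formula ctype \<phi>" using pder_formula[OF p_allI.hyps(1)] p_allI.prems by auto
  have lc1: "lc_at 0 (tr \<phi>)" using fi formula_lc by auto
  have tyc: "typed ctype [\<tau>] (closep 0 x \<phi>) To"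
    using typed_close[of ctype "[]" \<phi> To x \<tau>] fi p_allI.hyps(2) by (simp add: formula_def)
  have lc2: "lc_at 1 (tr (closep 0 x \<phi>))" using typed_lc[OF tyc] by simp
  have fin: "finite (fvls (Gs ctype \<Delta> S))" using p_allI.prems by (simp add: fin_Gs)
  have fS: "finite (insert x S)" using p_allI.prems(4) by simp
  have sub1: "FVs \<Delta> \<union> fvp \<phi> \<union> range ysel \<subseteq> insert x S" using p_allI.prems(5) by auto
  have ih: "ider (Gs ctype \<Delta> (insert x S)) (tr \<phi>)" by (rule p_allI.IH[OF p_allI.prems(1-3) fS sub1])
  obtain n' where n': "(n', \<tau>) \<notin> fvls (Gs ctype \<Delta> S) \<union> fvp \<phi> \<union> {x}"
  proof -
    have "finite (fvls (Gs ctype \<Delta> S) \<union> fvp \<phi> \<union> {x})" using fin by simp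
    from fresh_var[OF this, of \<tau>] show ?thesis using that by blast
  qed
  define x' where "x' = (n', \<tau>)"
  have sx: "snd x' = \<tau>" "snd x = \<tau>" by (simp_all add: x'_def p_allI.hyps(2))
  let ?G = "insert (Avar x') (Gs ctype \<Delta> S)"
  let ?\<sigma> = "LV(x := LV x') :: 'b var \<Rightarrow> ('b,'c) lt"
  have fin2: "finite (fvls ?G)" using fin by simp
  have "ider ?G (lsubst ?\<sigma> (tr \<phi>))"
  proof (rule ider_cut[OF ih _ fin2], simp, rule ballI)
    fix g assume g: "g \<in> Gs ctype \<Delta> (insert x S)"
    show "ider ?G (lsubst ?\<sigma> g)"
    proof (cases "g = Avar x")
      case True
      then show ?thesis using sx by (auto simp: Avar_def intro: ider.i_ax)
    next
      case False
      then have "g \<in> Gs ctype \<Delta> S" "x \<notin> fvl g" using g p_allI.hyps(4)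
        by (auto simp: Gs_def AxC_def FVs_def)
      then show ?thesis using lsubst_upd_fresh[of x g LV "LV x'"] by (auto intro: ider.i_ax)
    qed
  qed
  hence "ider ?G (subst (tr (closep 0 x \<phi>)) (LV x') 0)"
    using tr_close[of 0 \<phi> "LV x'" x] lc1 by simp
  hence h: "ider ?G (LAp (LAbs (tr (closep 0 x \<phi>))) (LV x'))"
    by (rule ider.i_Eq[OF _ beq_sym[OF beq_beta]]) (use lc2 in simp)
  have "ider (Gs ctype \<Delta> S) (LAp (LAp cXi (At \<tau>)) (LAbs (tr (closep 0 x \<phi>))))"
    by (rule ider.i_Xi[OF h[unfolded Avar_def sx] L_At[OF p_allI.hyps(3)]])
       (use n' x'_def in auto)
  then show ?case by simp
next
  case (p_allE \<Delta> \<tau> \<phi> t)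
  let ?S = "S \<union> fvp t"
  have fi: "formula ctype (PAll \<tau> \<phi>)" using pder_formula[OF p_allE.hyps(1)] p_allE.prems by auto
  hence lc1: "lc_at (Suc 0) (tr \<phi>)" using typed_lc by (fastforce simp: formula_def elim: typed_PAllE)
  have tyt: "typed ctype [] t \<tau>" using p_allE.hyps(2) by (simp add: term_of_def)
  have lct: "lc_at 0 (tr t)" using typed_lc[OF tyt] by simp
  have fo: "formula ctype (openp 0 t \<phi>)"
    using pder_formula[OF pder.p_allE[OF p_allE.hyps]] p_allE.prems by auto
  have fin: "finite (fvls (Gs ctype \<Delta> ?S))" using p_allE.prems by (simp add: fin_Gs)
  have fS: "finite ?S" using p_allE.prems(4) by simp
  have sub1: "FVs \<Delta> \<union> fvp (PAll \<tau> \<phi>) \<union> range ysel \<subseteq> ?S" using p_allE.prems(5) fvp_open1[of \<phi> 0 t] by auto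
  have ih: "ider (Gs ctype \<Delta> ?S) (tr (PAll \<tau> \<phi>))" by (rule p_allE.IH[OF p_allE.prems(1-3) fS sub1])
  hence ih: "ider (Gs ctype \<Delta> ?S) (LAp (LAp cXi (At \<tau>)) (LAbs (tr \<phi>)))" by simp
  have A: "ider (Gs ctype \<Delta> ?S) (LAp (At \<tau>) (tr t))"
    using typed_A[OF tyt AxC_Gs _ fin] Avar_Gs by blast
  have d: "ider (Gs ctype \<Delta> ?S) (tr (openp 0 t \<phi>))"
    by (rule ider.i_Eq[OF ider.i_Xe[OF ih A] beta']) (use tr_open[OF lct lc1] formula_lc[OF fo] in auto)
  show ?case
    by (rule elim[of \<Delta> S ysel "tr (openp 0 t \<phi>)" ctype "fvp t", OF p_allE.prems(1,4) _ _ p_allE.prems(3) _ d]) (use p_allE.prems(5) in auto)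
qed

lemma FVs_mono: "A \<subseteq> B \<Longrightarrow> FVs A \<subseteq> FVs B"
  by (auto simp: FVs_def)

theorem mainTheorem8:
  fixes ctype :: "'c::countable \<Rightarrow> 'b::finite ty"
    and \<Delta> :: "('b, 'c) pt set" and \<phi> :: "('b, 'c) pt"
    and ysel :: "'b \<Rightarrow> 'b var"
  assumes "\<forall>\<delta>\<in>\<Delta>. formula ctype \<delta>"
    and "formula ctype \<phi>"
    and "\<forall>b. snd (ysel b) = Base b \<and> ysel b \<notin> FVs (insert \<phi> \<Delta>)"
    and "pred_derivable ctype \<Delta> \<phi>"
  shows "i0_derivable (tr ` \<Delta> \<union> GammaD ctype ysel (insert \<phi> \<Delta>)) (tr \<phi>)"
proof -
  from assms(4) obtain \<Delta>0 where D0: "\<Delta>0 \<subseteq> \<Delta>" "finite \<Delta>0" "pder ctype \<Delta>0 \<phi>"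
    unfolding pred_derivable_def by blast
  define S where "S = FVs (insert \<phi> \<Delta>0) \<union> range ysel"
  have fS: "finite S" using D0(2) by (simp add: S_def finite_FVs)
  have ys: "\<forall>b. snd (ysel b) = Base b" using assms(3) by blast
  have fo: "\<forall>\<delta>\<in>\<Delta>0. formula ctype \<delta>" using assms(1) D0(1) by blast
  have sub: "FVs \<Delta>0 \<union> fvp \<phi> \<union> range ysel \<subseteq> S" by (auto simp: S_def)
  have d: "ider (Gs ctype \<Delta>0 S) (tr \<phi>)" by (rule main[OF D0(3) D0(2) fo ys fS sub])
  obtain G0 where G0: "G0 \<subseteq> Gs ctype \<Delta>0 S" "finite G0" "ider G0 (tr \<phi>)"
    using ider_compact[OF d] by blast
  have "Gs ctype \<Delta>0 S \<subseteq> tr ` \<Delta> \<union> GammaD ctype ysel (insert \<phi> \<Delta>)"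
  proof
    fix g assume g: "g \<in> Gs ctype \<Delta>0 S"
    show "g \<in> tr ` \<Delta> \<union> GammaD ctype ysel (insert \<phi> \<Delta>)"
    proof (cases "g \<in> tr ` \<Delta>0 \<union> AxC ctype")
      case True
      then show ?thesis using D0(1) by (auto simp: AxC_def GammaD_def)
    next
      case False
      then obtain z where z: "z \<in> S" "g = Avar z" using g by (auto simp: Gs_def)
      show ?thesis
      proof (cases "z \<in> FVs (insert \<phi> \<Delta>0)")
        case True
        hence "z \<in> FVs (insert \<phi> \<Delta>)" using FVs_mono[of "insert \<phi> \<Delta>0" "insert \<phi> \<Delta>"] D0(1) by blast
        hence "g \<in> {LAp (At (snd x)) (LV x) | x. x \<in> FVs (insert \<phi> \<Delta>)}"
          using z unfolding Avar_def by blast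
        then show ?thesis unfolding GammaD_def by blast
      next
        case False
        then obtain b where "z = ysel b" using z by (auto simp: S_def)
        then show ?thesis using z ys by (auto simp: GammaD_def Avar_def)
      qed
    qed
  qed
  then show ?thesis unfolding i0_derivable_def using G0 by blast
qed

end
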